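(* Let $d = 2$ and $n \ge 1$. Every generalized epistemic state $(V,\vec v)$ on $n$ elementary systems has a corresponding toy stabilizer state, and every toy stabilizer state $\mathcal{S}$ on $n$ elementary systems has a corresponding generalized epistemic state. Furthermore, if the observables $\vec f, \vec g \in \mathbb{Z}_2^{2n}$ correspond to the toy Pauli operators $g', g''$ respectively, then $\vec f + \vec g$ corresponds to $g' g''$.
   Context: Generalized formalism ($d=2$): phase space $\Omega = \mathbb{Z}_2^{2n}$ with coordinates $\vec m = (q_1,p_1,\dots,q_n,p_n)^T$. An observable (quadrature variable) is a vector $\vec f \in \Omega$, evaluated on $\vec m$ as $\vec f^T \vec m \bmod 2$. The symplectic form is $\langle \vec f, \vec g\rangle = \sum_{i=1}^n (f_{2i-1} g_{2i} - f_{2i} g_{2i-1}) \bmod 2$; $\vec f,\vec g$ commute if $\langle \vec f,\vec g\rangle = 0$. A subspace $V\subseteq\Omega$ is isotropic if all its elements pairwise commute. A generalized epistemic state is a pair $(V,\vec v)$ with $V$ isotropic and $\vec v\in\Omega$ (valuation vector). Toy stabilizer formalism: let $\mathcal{X} = \mathrm{diag}(1,-1,1,-1)$, $\mathcal{Y} = \mathrm{diag}(1,-1,-1,1)$, $\mathcal{Z} = \mathrm{diag}(1,1,-1,-1)$ (so $\mathcal Y = \mathcal Z\mathcal X$), and the toy Pauli group $G_n = \{\alpha\, p_1\otimes\cdots\otimes p_n : p_i \in \{\mathbb{1}_4,\mathcal X,\mathcal Y,\mathcal Z\}, \alpha\in\{\pm1\}\}$, generated by $-\mathbb 1$ and $\mathcal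 X_k,\mathcal Z_k$ (acting as $\mathcal X,\mathcal Z$ on the $k$-th factor). Let $m: G_n \to P_n$ be the group homomorphism into the $n$-qubit Pauli group with $m(\mathcal X_k) = X_k$, $m(\mathcal Z_k) = Z_k$, $m(-\mathbb 1) = -\mathbb 1$; two elements $g,h\in G_n$ "commute" if $m(g)$ and $m(h)$ commute. A toy stabilizer state is a subgroup $\mathcal S\le G_n$ whose elements pairwise "commute" and which does not contain $-\mathbb 1$. Correspondence: an observable $\vec f$ corresponds to a toy Pauli operator $g = \alpha p_1\otimes\cdots\otimes p_n$ (with any $\alpha\in\{\pm 1\}$) if for each $j$: $(f_{2j-1},f_{2j}) = (0,0) \iff p_j = \mathbb 1$, $(0,1)\iff p_j = \mathcal Z$, $(1,0)\iff p_j=\mathcal X$, $(1,1)\iff p_j = \mathcal Y$. A stabilizer state $\mathcal S$ corresponds to a generalized state $(V,\vec v)$ (and vice versa) iff for each $\vec f\in V$ there is a corresponding $g = \alpha p_1\otimes\cdots\otimes p_n \in \mathcal S$ with $\alpha = (-1)^{\vec f^T \vec v}$. *)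

theory Defs
  imports Complex_Main "HOL-Library.Z2"
begin

(* A phase-space vector in Z_2^{2n} is a function nat => bit vanishing outside {0..<2n}.
   0-based coordinates: q_{j+1} = m (2*j), p_{j+1} = m (2*j+1), for j < n. *)

definition phase_space :: "nat \<Rightarrow> (nat \<Rightarrow> bit) set" where
  "phase_space n = {m. \<forall>i\<ge>2*n. m i = 0}"

definition vadd :: "(nat \<Rightarrow> bit) \<Rightarrow> (nat \<Rightarrow> bit) \<Rightarrow> nat \<Rightarrow> bit" where
  "vadd f g = (\<lambda>i. f i + g i)"

definition evalv :: "nat \<Rightarrow> (nat \<Rightarrow> bit) \<Rightarrow> (nat \<Rightarrow> bit) \<Rightarrow> bit" where
  "evalv n f m = (\<Sum>i<2*n. f i * m i)"

definition symp :: "nat \<Rightarrow> (nat \<Rightarrow> bit) \<Rightarrow> (nat \<Rightarrow> bit) \<Rightarrow> bit" where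
  "symp n f g = (\<Sum>j<n. f (2*j) * g (2*j+1) - f (2*j+1) * g (2*j))"

definition subspace2 :: "nat \<Rightarrow> (nat \<Rightarrow> bit) set \<Rightarrow> bool" where
  "subspace2 n V \<longleftrightarrow> V \<subseteq> phase_space n \<and> (\<lambda>_. 0) \<in> V \<and>
     (\<forall>f\<in>V. \<forall>g\<in>V. vadd f g \<in> V) \<and> (\<forall>c::bit. \<forall>f\<in>V. (\<lambda>i. c * f i) \<in> V)"

definition isotropic :: "nat \<Rightarrow> (nat \<Rightarrow> bit) set \<Rightarrow> bool" where
  "isotropic n V \<longleftrightarrow> subspace2 n V \<and> (\<forall>f\<in>V. \<forall>g\<in>V. symp n f g = 0)"

definition gen_state :: "nat \<Rightarrow> (nat \<Rightarrow> bit) set \<Rightarrow> (nat \<Rightarrow> bit) \<Rightarrow> bool" where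
  "gen_state n V v \<longleftrightarrow> isotropic n V \<and> v \<in> phase_space n"

datatype pl = PI | PX | PY | PZ

(* diagonal entries (index 0..3) of the 4x4 toy matrices 1, X, Y, Z *)
fun tsite :: "pl \<Rightarrow> nat \<Rightarrow> int" where
  "tsite PI k = 1"
| "tsite PX k = (if k = 0 \<or> k = 2 then 1 else -1)"
| "tsite PY k = (if k = 0 \<or> k = 3 then 1 else -1)"
| "tsite PZ k = (if k = 0 \<or> k = 1 then 1 else -1)"

(* multi-indices of the 4^n-dimensional tensor product space *)
definition tidx :: "nat \<Rightarrow> (nat \<Rightarrow> nat) set" where
  "tidx n = {k. (\<forall>i<n. k i < 4) \<and> (\<forall>i\<ge>n. k i = 0)}"

(* the diagonal matrix  alpha p_1 (x) ... (x) p_n, given by its diagonal entries *)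
definition toy_op :: "nat \<Rightarrow> int \<Rightarrow> (nat \<Rightarrow> pl) \<Rightarrow> (nat \<Rightarrow> nat) \<Rightarrow> int" where
  "toy_op n \<alpha> p = (\<lambda>k. if k \<in> tidx n then \<alpha> * (\<Prod>i<n. tsite (p i) (k i)) else 0)"

definition toy_group :: "nat \<Rightarrow> ((nat \<Rightarrow> nat) \<Rightarrow> int) set" where
  "toy_group n = {toy_op n \<alpha> p | \<alpha> p. \<alpha> \<in> {1, -1}}"

(* matrix product of diagonal matrices *)
definition tmul :: "((nat \<Rightarrow> nat) \<Rightarrow> int) \<Rightarrow> ((nat \<Rightarrow> nat) \<Rightarrow> int) \<Rightarrow> (nat \<Rightarrow> nat) \<Rightarrow> int" where
  "tmul g h = (\<lambda>k. g k * h k)"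

definition toy_one :: "nat \<Rightarrow> (nat \<Rightarrow> nat) \<Rightarrow> int" where
  "toy_one n = toy_op n 1 (\<lambda>_. PI)"

definition toy_minus_one :: "nat \<Rightarrow> (nat \<Rightarrow> nat) \<Rightarrow> int" where
  "toy_minus_one n = toy_op n (-1) (\<lambda>_. PI)"

(* single qubit matrices 1, X, Z and  Z X  = m(Y) ; rows/cols indexed by bool (False = 0) *)
fun qsite :: "pl \<Rightarrow> bool \<Rightarrow> bool \<Rightarrow> complex" where
  "qsite PI a b = (if a = b then 1 else 0)"
| "qsite PX a b = (if a \<noteq> b then 1 else 0)"
| "qsite PZ a b = (if a = b then (if a then -1 else 1) else 0)"
| "qsite PY a b = (if a \<noteq> b then (if a then -1 else 1) else 0)"

definition bits :: "nat \<Rightarrow> (nat \<Rightarrow> bool) set" where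
  "bits n = {x. \<forall>i\<ge>n. \<not> x i}"

definition qubit_op :: "nat \<Rightarrow> int \<Rightarrow> (nat \<Rightarrow> pl) \<Rightarrow> (nat \<Rightarrow> bool) \<Rightarrow> (nat \<Rightarrow> bool) \<Rightarrow> complex" where
  "qubit_op n \<alpha> p x y = of_int \<alpha> * (\<Prod>i<n. qsite (p i) (x i) (y i))"

definition qmul :: "nat \<Rightarrow> ((nat \<Rightarrow> bool) \<Rightarrow> (nat \<Rightarrow> bool) \<Rightarrow> complex)
    \<Rightarrow> ((nat \<Rightarrow> bool) \<Rightarrow> (nat \<Rightarrow> bool) \<Rightarrow> complex) \<Rightarrow> (nat \<Rightarrow> bool) \<Rightarrow> (nat \<Rightarrow> bool) \<Rightarrow> complex" where
  "qmul n A B x y = (\<Sum>z\<in>bits n. A x z * B z y)"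

definition qcommute :: "nat \<Rightarrow> ((nat \<Rightarrow> bool) \<Rightarrow> (nat \<Rightarrow> bool) \<Rightarrow> complex)
    \<Rightarrow> ((nat \<Rightarrow> bool) \<Rightarrow> (nat \<Rightarrow> bool) \<Rightarrow> complex) \<Rightarrow> bool" where
  "qcommute n A B \<longleftrightarrow> (\<forall>x\<in>bits n. \<forall>y\<in>bits n. qmul n A B x y = qmul n B A x y)"

(* the map m : G_n -> P_n,  m(alpha p_1 (x) ... (x) p_n) = alpha m(p_1) (x) ... (x) m(p_n),
   with m(X)=X, m(Z)=Z, m(Y)=m(Z X)=Z X, m(-1) = -1. *)
definition toy_m :: "nat \<Rightarrow> ((nat \<Rightarrow> nat) \<Rightarrow> int) \<Rightarrow> (nat \<Rightarrow> bool) \<Rightarrow> (nat \<Rightarrow> bool) \<Rightarrow> complex" where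
  "toy_m n g = (SOME Q. \<exists>\<alpha> p. \<alpha> \<in> {1, -1} \<and> g = toy_op n \<alpha> p \<and> Q = qubit_op n \<alpha> p)"

definition toy_commute :: "nat \<Rightarrow> ((nat \<Rightarrow> nat) \<Rightarrow> int) \<Rightarrow> ((nat \<Rightarrow> nat) \<Rightarrow> int) \<Rightarrow> bool" where
  "toy_commute n g h \<longleftrightarrow> qcommute n (toy_m n g) (toy_m n h)"

definition toy_subgroup :: "nat \<Rightarrow> ((nat \<Rightarrow> nat) \<Rightarrow> int) set \<Rightarrow> bool" where
  "toy_subgroup n S \<longleftrightarrow> S \<subseteq> toy_group n \<and> toy_one n \<in> S \<and>
     (\<forall>g\<in>S. \<forall>h\<in>S. tmul g h \<in> S) \<and> (\<forall>g\<in>S. \<exists>h\<in>S. tmul g h = toy_one n)"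

definition toy_stab :: "nat \<Rightarrow> ((nat \<Rightarrow> nat) \<Rightarrow> int) set \<Rightarrow> bool" where
  "toy_stab n S \<longleftrightarrow> toy_subgroup n S \<and> (\<forall>g\<in>S. \<forall>h\<in>S. toy_commute n g h) \<and> toy_minus_one n \<notin> S"

fun lab :: "bit \<Rightarrow> bit \<Rightarrow> pl" where
  "lab a b = (if a = 0 then (if b = 0 then PI else PZ) else (if b = 0 then PX else PY))"

definition labels_match :: "nat \<Rightarrow> (nat \<Rightarrow> bit) \<Rightarrow> (nat \<Rightarrow> pl) \<Rightarrow> bool" where
  "labels_match n f p \<longleftrightarrow> (\<forall>j<n. p j = lab (f (2*j)) (f (2*j+1)))"

definition corr_obs :: "nat \<Rightarrow> (nat \<Rightarrow> bit) \<Rightarrow> ((nat \<Rightarrow> nat) \<Rightarrow> int) \<Rightarrow> bool" where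
  "corr_obs n f g \<longleftrightarrow> (\<exists>\<alpha> p. \<alpha> \<in> {1, -1} \<and> g = toy_op n \<alpha> p \<and> labels_match n f p)"

definition sgn_bit :: "bit \<Rightarrow> int" where
  "sgn_bit b = (if b = 0 then 1 else -1)"

definition corr_state :: "nat \<Rightarrow> ((nat \<Rightarrow> nat) \<Rightarrow> int) set \<Rightarrow> (nat \<Rightarrow> bit) set \<Rightarrow> (nat \<Rightarrow> bit) \<Rightarrow> bool" where
  "corr_state n S V v \<longleftrightarrow>
     (\<forall>f\<in>V. \<exists>p. labels_match n f p \<and> toy_op n (sgn_bit (evalv n f v)) p \<in> S) \<and>
     (\<forall>g\<in>S. \<exists>f\<in>V. \<exists>p. labels_match n f p \<and> g = toy_op n (sgn_bit (evalv n f v)) p)"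

end

theory Submission
  imports Defs
begin


declare add_bit_eq_xor[simp del] mult_bit_eq_and[simp del]

lemma bit_self_add[simp]: "(a::bit) + a = 0" by (cases a) simp_all

lemma sgn_bit_add: "sgn_bit (a + b) = sgn_bit a * sgn_bit b"
  by (cases a; cases b) (simp_all add: sgn_bit_def)

lemma sgn_bit_pm: "sgn_bit a \<in> {1, -1}" by (simp add: sgn_bit_def)

lemma sgn_bit_eq1: "sgn_bit a = 1 \<longleftrightarrow> a = 0" by (simp add: sgn_bit_def)

lemma sgn_bit_inj: "sgn_bit a = sgn_bit b \<Longrightarrow> a = b"
  by (cases a; cases b) (simp_all add: sgn_bit_def)

lemma sgn_bit_sum: "finite A \<Longrightarrow> sgn_bit (sum f A) = (\<Prod>i\<in>A. sgn_bit (f i))"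
  by (induction A rule: finite_induct) (simp_all add: sgn_bit_add, simp add: sgn_bit_def)

fun pmul :: "pl \<Rightarrow> pl \<Rightarrow> pl" where
  "pmul PI b = b"
| "pmul a PI = a"
| "pmul PX PX = PI" | "pmul PX PY = PZ" | "pmul PX PZ = PY"
| "pmul PY PX = PZ" | "pmul PY PY = PI" | "pmul PY PZ = PX"
| "pmul PZ PX = PY" | "pmul PZ PY = PX" | "pmul PZ PZ = PI"

lemma pmul_self[simp]: "pmul a a = PI" by (cases a) simp_all

lemma tsite_0[simp]: "tsite a 0 = 1" by (cases a) simp_all

lemma tsite_mul: "k < 4 \<Longrightarrow> tsite (pmul a b) k = tsite a k * tsite b k"
  by (cases a; cases b) (auto simp: less_Suc_eq numeral_eq_Suc)

lemma lab_hom: "lab (a + c) (b + d) = pmul (lab a b) (lab c d)"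
  by (cases a; cases b; cases c; cases d) simp_all

fun xb :: "pl \<Rightarrow> bit" where "xb PI = 0" | "xb PX = 1" | "xb PY = 1" | "xb PZ = 0"
fun zb :: "pl \<Rightarrow> bit" where "zb PI = 0" | "zb PX = 0" | "zb PY = 1" | "zb PZ = 1"

lemma lab_xz[simp]: "lab (xb a) (zb a) = a" by (cases a) simp_all
lemma xb_mul: "xb (pmul a b) = xb a + xb b" by (cases a; cases b) simp_all
lemma zb_mul: "zb (pmul a b) = zb a + zb b" by (cases a; cases b) simp_all
lemma xz_inj: "xb a = xb b \<Longrightarrow> zb a = zb b \<Longrightarrow> a = b" by (cases a; cases b) simp_all

definition omega :: "pl \<Rightarrow> pl \<Rightarrow> bit" where
  "omega a b = xb a * zb b - zb a * xb b"

lemma omega_lab: "omega (lab a b) (lab c d) = a * d - b * c"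
  by (cases a; cases b; cases c; cases d) (simp_all add: omega_def)

lemma tsite_inj: "tsite a 1 = tsite b 1 \<Longrightarrow> tsite a 2 = tsite b 2 \<Longrightarrow> tsite a 3 = tsite b 3 \<Longrightarrow> a = b"
  by (cases a; cases b) simp_all

lemma toy_op_mul:
  "tmul (toy_op n \<alpha> p) (toy_op n \<beta> q) = toy_op n (\<alpha> * \<beta>) (\<lambda>i. pmul (p i) (q i))"
proof
  fix k
  show "tmul (toy_op n \<alpha> p) (toy_op n \<beta> q) k = toy_op n (\<alpha> * \<beta>) (\<lambda>i. pmul (p i) (q i)) k"
  proof (cases "k \<in> tidx n")
    case True
    then have "\<forall>i<n. k i < 4" by (simp add: tidx_def)
    then have "(\<Prod>i<n. tsite (pmul (p i) (q i)) (k i)) = (\<Prod>i<n. tsite (p i) (k i) * tsite (q i) (k i))"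
      by (intro prod.cong) (simp_all add: tsite_mul)
    then show ?thesis using True by (simp add: tmul_def toy_op_def prod.distrib)
  next
    case False
    then show ?thesis by (simp add: tmul_def toy_op_def)
  qed
qed

lemma toy_op_cong: "(\<forall>i<n. p i = q i) \<Longrightarrow> toy_op n \<alpha> p = toy_op n \<alpha> q"
  unfolding toy_op_def by (intro ext) (auto intro!: prod.cong)

lemma qubit_op_cong: "(\<forall>i<n. p i = q i) \<Longrightarrow> qubit_op n \<alpha> p = qubit_op n \<alpha> q"
  unfolding qubit_op_def by (intro ext) (auto intro!: prod.cong)

lemma toy_op_inj:
  assumes "toy_op n \<alpha> p = toy_op n \<beta> q" "\<alpha> \<in> {1,-1}" "\<beta> \<in> {1,-1}"
  shows "\<alpha> = \<beta> \<and> (\<forall>i<n. p i = q i)"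
proof -
  have k0: "(\<lambda>_. 0) \<in> tidx n" by (simp add: tidx_def)
  have "toy_op n \<alpha> p (\<lambda>_. 0) = toy_op n \<beta> q (\<lambda>_. 0)" using assms(1) by simp
  then have ab: "\<alpha> = \<beta>" using k0 by (simp add: toy_op_def)
  have "p i = q i" if i: "i < n" for i
  proof -
    have c: "tsite (p i) c = tsite (q i) c" if c: "c < 4" for c
    proof -
      let ?k = "\<lambda>j. if j = i then c else 0"
      have kin: "?k \<in> tidx n" using i c by (simp add: tidx_def)
      have pr: "(\<Prod>j<n. tsite (r j) (?k j)) = tsite (r i) c" for r
      proof -
        have "(\<Prod>j<n. tsite (r j) (?k j)) = (\<Prod>j<n. if j = i then tsite (r i) c else 1)"
          by (intro prod.cong) auto
        also have "\<dots> = tsite (r i) c" using i by (simp add: prod.delta)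
        finally show ?thesis .
      qed
      have "toy_op n \<alpha> p ?k = toy_op n \<beta> q ?k" using assms(1) by simp
      then have "\<alpha> * tsite (p i) c = \<beta> * tsite (q i) c" using kin by (simp only: toy_op_def pr if_True)
      then show ?thesis using ab assms(2) by auto
    qed
    show ?thesis by (rule tsite_inj) (simp_all add: c)
  qed
  then show ?thesis using ab by simp
qed

lemma toy_m_op: assumes "\<alpha> \<in> {1,-1}" shows "toy_m n (toy_op n \<alpha> p) = qubit_op n \<alpha> p"
  unfolding toy_m_def
proof (rule someI2[where Q="\<lambda>Q. Q = qubit_op n \<alpha> p"])
  show "\<exists>\<alpha>' p'. \<alpha>' \<in> {1, -1} \<and> toy_op n \<alpha> p = toy_op n \<alpha>' p' \<and> qubit_op n \<alpha> p = qubit_op n \<alpha>' p'"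
    using assms by blast
next
  fix Q assume "\<exists>\<alpha>' p'. \<alpha>' \<in> {1, -1} \<and> toy_op n \<alpha> p = toy_op n \<alpha>' p' \<and> Q = qubit_op n \<alpha>' p'"
  then obtain \<alpha>' p' where h: "\<alpha>' \<in> {1, -1}" "toy_op n \<alpha> p = toy_op n \<alpha>' p'" "Q = qubit_op n \<alpha>' p'" by blast
  from toy_op_inj[OF h(2) assms h(1)] have "\<alpha> = \<alpha>'" "\<forall>i<n. p i = p' i" by auto
  then show "Q = qubit_op n \<alpha> p" using h(3) qubit_op_cong by metis
qed




lemma bits_Suc: "bits (Suc n) = (\<lambda>z. z(n:=False)) ` bits n \<union> (\<lambda>z. z(n:=True)) ` bits n"
proof (intro equalityI subsetI)
  fix x assume x: "x \<in> bits (Suc n)"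
  have z: "x(n := False) \<in> bits n" using x by (auto simp: bits_def)
  have "x = (x(n := False))(n := x n)" by simp
  then have "x \<in> (\<lambda>z. z(n:=x n)) ` bits n" using z by blast
  then show "x \<in> (\<lambda>z. z(n:=False)) ` bits n \<union> (\<lambda>z. z(n:=True)) ` bits n"
    by (cases "x n") simp_all
next
  fix x assume "x \<in> (\<lambda>z. z(n:=False)) ` bits n \<union> (\<lambda>z. z(n:=True)) ` bits n"
  then show "x \<in> bits (Suc n)" by (auto simp: bits_def)
qed

lemma bits_0: "bits 0 = {\<lambda>_. False}" by (auto simp: bits_def)

lemma finite_bits: "finite (bits n)"
  by (induction n) (simp_all add: bits_0 bits_Suc)

lemma inj_upd: "inj_on (\<lambda>z. z(n:=b)) (bits n)"
  by (rule inj_onI) (auto simp: bits_def fun_eq_iff fun_upd_def split: if_splits)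

lemma prod_sum_bits:
  fixes F :: "nat \<Rightarrow> bool \<Rightarrow> 'a::comm_semiring_1"
  shows "(\<Sum>z\<in>bits n. \<Prod>i<n. F i (z i)) = (\<Prod>i<n. F i False + F i True)"
proof (induction n)
  case 0 then show ?case by (simp add: bits_0)
next
  case (Suc n)
  have disj: "(\<lambda>z. z(n:=False)) ` bits n \<inter> (\<lambda>z. z(n:=True)) ` bits n = {}" by (auto dest!: fun_cong[where x=n])
  have part: "(\<Sum>z\<in>(\<lambda>z. z(n:=b)) ` bits n. \<Prod>i<Suc n. F i (z i))
      = (\<Sum>z\<in>bits n. \<Prod>i<n. F i (z i)) * F n b" for b
  proof -
    have "(\<Sum>z\<in>(\<lambda>z. z(n:=b)) ` bits n. \<Prod>i<Suc n. F i (z i))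
        = (\<Sum>z\<in>bits n. \<Prod>i<Suc n. F i ((z(n:=b)) i))"
      by (simp add: sum.reindex[OF inj_upd])
    also have "\<dots> = (\<Sum>z\<in>bits n. (\<Prod>i<n. F i (z i)) * F n b)"
    proof (intro sum.cong refl)
      fix z
      have "(\<Prod>i<n. F i ((z(n:=b)) i)) = (\<Prod>i<n. F i (z i))" by (intro prod.cong) auto
      then show "(\<Prod>i<Suc n. F i ((z(n:=b)) i)) = (\<Prod>i<n. F i (z i)) * F n b" by simp
    qed
    also have "\<dots> = (\<Sum>z\<in>bits n. \<Prod>i<n. F i (z i)) * F n b" by (simp add: sum_distrib_right)
    finally show ?thesis .
  qed
  have "(\<Sum>z\<in>bits (Suc n). \<Prod>i<Suc n. F i (z i))
     = (\<Sum>z\<in>(\<lambda>z. z(n:=False)) ` bits n. \<Prod>i<Suc n. F i (z i)) + (\<Sum>z\<in>(\<lambda>z. z(n:=True)) ` bits n. \<Prod>i<Suc n. F i (z i))"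
    unfolding bits_Suc by (rule sum.union_disjoint) (simp_all add: finite_bits disj)
  also have "\<dots> = (\<Prod>i<n. F i False + F i True) * (F n False + F n True)"
    by (simp only: part Suc distrib_left)
  finally show ?case by simp
qed

definition qs2 :: "pl \<Rightarrow> pl \<Rightarrow> bool \<Rightarrow> bool \<Rightarrow> complex" where
  "qs2 a b u w = qsite a u False * qsite b False w + qsite a u True * qsite b True w"

lemma qmul_ops: "qmul n (qubit_op n \<alpha> p) (qubit_op n \<beta> q) x y
   = of_int \<alpha> * of_int \<beta> * (\<Prod>i<n. qs2 (p i) (q i) (x i) (y i))"
proof -
  have "qmul n (qubit_op n \<alpha> p) (qubit_op n \<beta> q) x y
      = (\<Sum>z\<in>bits n. of_int \<alpha> * of_int \<beta> * (\<Prod>i<n. qsite (p i) (x i) (z i) * qsite (q i) (z i) (y i)))"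
    unfolding qmul_def qubit_op_def by (intro sum.cong refl) (simp add: prod.distrib algebra_simps)
  also have "\<dots> = of_int \<alpha> * of_int \<beta> * (\<Sum>z\<in>bits n. (\<Prod>i<n. qsite (p i) (x i) (z i) * qsite (q i) (z i) (y i)))"
    by (simp add: sum_distrib_left)
  also have "\<dots> = of_int \<alpha> * of_int \<beta> * (\<Prod>i<n. qs2 (p i) (q i) (x i) (y i))"
    using prod_sum_bits[of "\<lambda>i t. qsite (p i) (x i) t * qsite (q i) t (y i)" n]
    by (simp add: qs2_def)
  finally show ?thesis .
qed

lemma qs2_comm: "qs2 a b u w = of_int (sgn_bit (omega a b)) * qs2 b a u w"
  by (cases a; cases b; cases u; cases w) (simp_all add: qs2_def omega_def sgn_bit_def)

lemma qs2_nz: "\<exists>w. qs2 a b u w \<noteq> 0"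
  by (cases a; cases b; cases u) (auto simp: qs2_def)

lemma qcommute_iff:
  assumes "\<alpha> \<in> {1,-1}" "\<beta> \<in> {1,-1}"
  shows "qcommute n (qubit_op n \<alpha> p) (qubit_op n \<beta> q) \<longleftrightarrow> (\<Sum>i<n. omega (p i) (q i)) = 0"
proof -
  have key: "(\<Prod>i<n. qs2 (p i) (q i) (x i) (y i))
     = of_int (sgn_bit (\<Sum>i<n. omega (p i) (q i))) * (\<Prod>i<n. qs2 (q i) (p i) (x i) (y i))" for x y
    by (simp add: qs2_comm[of "p _" "q _"] prod.distrib sgn_bit_sum of_int_prod)
  show ?thesis
  proof
    assume c: "qcommute n (qubit_op n \<alpha> p) (qubit_op n \<beta> q)"
    define y where "y = (\<lambda>i. if i < n then (SOME w. qs2 (q i) (p i) False w \<noteq> 0) else False)"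
    have xb: "(\<lambda>_. False) \<in> bits n" and yb: "y \<in> bits n" by (auto simp: bits_def y_def)
    have nz: "(\<Prod>i<n. qs2 (q i) (p i) False (y i)) \<noteq> 0"
      unfolding y_def by (simp add: someI_ex[OF qs2_nz])
    from c xb yb have "qmul n (qubit_op n \<alpha> p) (qubit_op n \<beta> q) (\<lambda>_. False) y
       = qmul n (qubit_op n \<beta> q) (qubit_op n \<alpha> p) (\<lambda>_. False) y" unfolding qcommute_def by blast
    then have "of_int \<alpha> * of_int \<beta> * (of_int (sgn_bit (\<Sum>i<n. omega (p i) (q i))) * (\<Prod>i<n. qs2 (q i) (p i) False (y i)))
       = of_int \<beta> * of_int \<alpha> * (\<Prod>i<n. qs2 (q i) (p i) False (y i))"
      by (simp only: qmul_ops key)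
    moreover have "(of_int \<alpha> :: complex) \<noteq> 0" "(of_int \<beta> :: complex) \<noteq> 0" using assms by auto
    ultimately have "(of_int (sgn_bit (\<Sum>i<n. omega (p i) (q i))) :: complex) = 1"
      using nz by (simp add: algebra_simps)
    then have "sgn_bit (\<Sum>i<n. omega (p i) (q i)) = 1" by (metis of_int_eq_1_iff)
    then show "(\<Sum>i<n. omega (p i) (q i)) = 0" by (simp add: sgn_bit_eq1)
  next
    assume "(\<Sum>i<n. omega (p i) (q i)) = 0"
    then show "qcommute n (qubit_op n \<alpha> p) (qubit_op n \<beta> q)"
      unfolding qcommute_def by (simp add: qmul_ops key sgn_bit_def)
  qed
qed




lemma extend_char:
  fixes W :: "(nat \<Rightarrow> bit) set" and \<chi> :: "(nat \<Rightarrow> bit) \<Rightarrow> bit"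
  assumes "\<forall>f\<in>W. \<forall>i\<ge>m. f i = 0" "(\<lambda>_. 0) \<in> W" "\<forall>f\<in>W. \<forall>g\<in>W. vadd f g \<in> W"
    "\<forall>f\<in>W. \<forall>g\<in>W. \<chi> (vadd f g) = \<chi> f + \<chi> g"
  shows "\<exists>v. (\<forall>i\<ge>m. v i = 0) \<and> (\<forall>f\<in>W. (\<Sum>i<m. f i * v i) = \<chi> f)"
  using assms
proof (induction m arbitrary: W)
  case 0
  have z: "\<chi> (\<lambda>_. 0) = 0"
  proof -
    have "\<chi> (vadd (\<lambda>_. 0) (\<lambda>_. 0)) = \<chi> (\<lambda>_. 0) + \<chi> (\<lambda>_. 0)" using 0(2,4) by blast
    then show ?thesis by (simp add: vadd_def)
  qed
  have "\<chi> f = 0" if "f \<in> W" for f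
  proof -
    have "f = (\<lambda>_. 0)" using 0(1) that by (intro ext) simp
    then show ?thesis using z by simp
  qed
  then show ?case by (intro exI[of _ "\<lambda>_. 0"]) simp
next
  case (Suc m)
  define W' where "W' = {f\<in>W. f m = 0}"
  have "\<exists>v. (\<forall>i\<ge>m. v i = 0) \<and> (\<forall>f\<in>W'. (\<Sum>i<m. f i * v i) = \<chi> f)"
  proof (rule Suc.IH)
    show "\<forall>f\<in>W'. \<forall>i\<ge>m. f i = 0"
    proof (intro ballI allI impI)
      fix f i assume "f \<in> W'" "m \<le> i" then show "f i = 0" using Suc.prems(1)
        by (cases "i = m") (auto simp: W'_def)
    qed
    show "(\<lambda>_. 0) \<in> W'" using Suc.prems(2) by (simp add: W'_def)
    show "\<forall>f\<in>W'. \<forall>g\<in>W'. vadd f g \<in> W'" using Suc.prems(3) by (simp add: W'_def vadd_def)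
    show "\<forall>f\<in>W'. \<forall>g\<in>W'. \<chi> (vadd f g) = \<chi> f + \<chi> g" using Suc.prems(4) by (simp add: W'_def)
  qed
  then obtain v' where v': "\<forall>i\<ge>m. v' i = 0" "\<forall>f\<in>W'. (\<Sum>i<m. f i * v' i) = \<chi> f" by blast
  show ?case
  proof (cases "\<exists>h\<in>W. h m = 1")
    case True
    then obtain h where h: "h \<in> W" "h m = 1" by blast
    define v where "v = v'(m := \<chi> h - (\<Sum>i<m. h i * v' i))"
    have sv: "(\<Sum>i<m. f i * v i) = (\<Sum>i<m. f i * v' i)" for f
      unfolding v_def by (intro sum.cong) auto
    have "(\<Sum>i<Suc m. f i * v i) = \<chi> f" if f: "f \<in> W" for f
    proof (cases "f m = 0")
      case True
      then have "f \<in> W'" using f by (simp add: W'_def)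
      then show ?thesis using v' True by (simp add: sv)
    next
      case False
      then have fm: "f m = 1" by simp
      have fh: "vadd f h \<in> W'" using Suc.prems(3) f h fm by (simp add: W'_def vadd_def)
      have "\<chi> (vadd f h) = (\<Sum>i<m. (f i + h i) * v' i)" using v'(2)[rule_format, OF fh] by (simp add: vadd_def)
      also have "\<dots> = (\<Sum>i<m. f i * v' i) + (\<Sum>i<m. h i * v' i)" by (simp add: distrib_right sum.distrib)
      finally have e: "\<chi> f + \<chi> h = (\<Sum>i<m. f i * v' i) + (\<Sum>i<m. h i * v' i)"
        using Suc.prems(4) f h by simp
      have "(\<Sum>i<Suc m. f i * v i) = (\<Sum>i<m. f i * v' i) + (\<chi> h + (\<Sum>i<m. h i * v' i))"
        by (simp add: sv fm v_def)
      also have "\<dots> = \<chi> f" using e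
        by (cases "\<chi> f"; cases "\<chi> h"; cases "\<Sum>i<m. f i * v' i"; cases "\<Sum>i<m. h i * v' i") simp_all
      finally show ?thesis .
    qed
    moreover have "\<forall>i\<ge>Suc m. v i = 0" using v'(1) by (simp add: v_def)
    ultimately show ?thesis by blast
  next
    case False
    then have "\<forall>f\<in>W. f m = 0" by auto
    then have "W' = W" by (auto simp: W'_def)
    then show ?thesis using v' \<open>\<forall>f\<in>W. f m = 0\<close>
      by (intro exI[of _ v']) simp
  qed
qed




lemma part3: "corr_obs n f g' \<Longrightarrow> corr_obs n g g'' \<Longrightarrow> corr_obs n (vadd f g) (tmul g' g'')"
proof -
  assume "corr_obs n f g'" "corr_obs n g g''"
  then obtain \<alpha> p \<beta> q where h: "\<alpha> \<in> {1,-1}" "g' = toy_op n \<alpha> p" "labels_match n f p"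
    "\<beta> \<in> {1,-1}" "g'' = toy_op n \<beta> q" "labels_match n g q" unfolding corr_obs_def by blast
  have "\<alpha> * \<beta> \<in> {1,-1}" using h by auto
  moreover have "tmul g' g'' = toy_op n (\<alpha> * \<beta>) (\<lambda>i. pmul (p i) (q i))" using h by (simp add: toy_op_mul)
  moreover have "labels_match n (vadd f g) (\<lambda>i. pmul (p i) (q i))"
    using h(3,6) unfolding labels_match_def vadd_def by (simp only: lab_hom) simp
  ultimately show ?thesis unfolding corr_obs_def by blast
qed

definition plab :: "(nat \<Rightarrow> bit) \<Rightarrow> nat \<Rightarrow> pl" where
  "plab f = (\<lambda>j. lab (f (2*j)) (f (2*j+1)))"

lemma symp_plab: "symp n f g = (\<Sum>j<n. omega (plab f j) (plab g j))"
  unfolding symp_def plab_def by (intro sum.cong refl) (simp only: omega_lab)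

lemma plab_vadd: "plab (vadd f g) = (\<lambda>j. pmul (plab f j) (plab g j))"
  unfolding plab_def vadd_def by (simp only: lab_hom)

lemma evalv_vadd: "evalv n (vadd f g) v = evalv n f v + evalv n g v"
  unfolding evalv_def vadd_def by (simp add: distrib_right sum.distrib)

lemma evalv_zero: "evalv n (\<lambda>_. 0) v = 0" by (simp add: evalv_def)

lemma plab_zero: "plab (\<lambda>_. 0) = (\<lambda>_. PI)" by (simp add: plab_def)

lemma part1:
  assumes gs: "gen_state n V v"
  shows "\<exists>S. toy_stab n S \<and> corr_state n S V v"
proof -
  have iso: "isotropic n V" using gs by (simp add: gen_state_def)
  then have sub: "subspace2 n V" and symp0: "\<forall>f\<in>V. \<forall>g\<in>V. symp n f g = 0" by (auto simp: isotropic_def)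
  then have ps: "V \<subseteq> phase_space n" and z: "(\<lambda>_. 0) \<in> V" and cl: "\<forall>f\<in>V. \<forall>g\<in>V. vadd f g \<in> V"
    by (auto simp: subspace2_def)
  define T where "T = (\<lambda>f. toy_op n (sgn_bit (evalv n f v)) (plab f))"
  define S where "S = T ` V"
  have one: "toy_one n \<in> S" unfolding S_def toy_one_def
  proof
    show "toy_op n 1 (\<lambda>_. PI) = T (\<lambda>_. 0)" by (simp add: T_def evalv_zero plab_zero sgn_bit_def)
  qed (rule z)
  have mul: "tmul (T f) (T g) = T (vadd f g)" for f g
    by (simp add: T_def toy_op_mul evalv_vadd sgn_bit_add plab_vadd)
  have sq: "tmul (T f) (T f) = toy_one n" for f
  proof -
    have "sgn_bit (evalv n f v) * sgn_bit (evalv n f v) = 1" by (simp add: sgn_bit_def)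
    then show ?thesis by (simp add: T_def toy_op_mul toy_one_def)
  qed
  have sub: "toy_subgroup n S" unfolding toy_subgroup_def
  proof (intro conjI)
    show "S \<subseteq> toy_group n" unfolding S_def T_def toy_group_def using sgn_bit_pm by blast
    show "toy_one n \<in> S" by (rule one)
    show "\<forall>g\<in>S. \<forall>h\<in>S. tmul g h \<in> S" unfolding S_def using mul cl by auto
    show "\<forall>g\<in>S. \<exists>h\<in>S. tmul g h = toy_one n" unfolding S_def using sq by auto
  qed
  have comm: "\<forall>g\<in>S. \<forall>h\<in>S. toy_commute n g h"
  proof (intro ballI)
    fix g h assume "g \<in> S" "h \<in> S"
    then obtain f f' where f: "f \<in> V" "f' \<in> V" "g = T f" "h = T f'" unfolding S_def by blast
    have "(\<Sum>j<n. omega (plab f j) (plab f' j)) = 0" using symp0 f by (simp add: symp_plab)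
    then show "toy_commute n g h"
      unfolding toy_commute_def f T_def by (simp only: toy_m_op[OF sgn_bit_pm] qcommute_iff[OF sgn_bit_pm sgn_bit_pm])
  qed
  have nm: "toy_minus_one n \<notin> S"
  proof
    assume "toy_minus_one n \<in> S"
    then obtain f where f: "f \<in> V" "toy_op n (-1) (\<lambda>_. PI) = T f" unfolding S_def toy_minus_one_def by blast
    from toy_op_inj[OF f(2)[unfolded T_def]] sgn_bit_pm
    have e: "-1 = sgn_bit (evalv n f v)" and p: "\<forall>i<n. PI = plab f i" by auto
    have "f i = 0" if "i < 2*n" for i
    proof -
      have "i div 2 < n" using that by simp
      then have "PI = lab (f (2 * (i div 2))) (f (2 * (i div 2) + 1))" using p by (simp add: plab_def)
      moreover have "i = 2 * (i div 2) \<or> i = 2 * (i div 2) + 1" by presburger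
      ultimately show ?thesis by (cases "f (2 * (i div 2))"; cases "f (2 * (i div 2) + 1)") auto
    qed
    then have "evalv n f v = 0" by (simp add: evalv_def)
    then show False using e by (simp add: sgn_bit_def)
  qed
  have "toy_stab n S" using sub comm nm by (simp add: toy_stab_def)
  moreover have "corr_state n S V v" unfolding corr_state_def
  proof (intro conjI ballI)
    fix f assume "f \<in> V"
    then show "\<exists>p. labels_match n f p \<and> toy_op n (sgn_bit (evalv n f v)) p \<in> S"
      by (intro exI[of _ "plab f"]) (auto simp: labels_match_def plab_def S_def T_def)
  next
    fix g assume "g \<in> S"
    then obtain f where f: "f \<in> V" "g = T f" by (auto simp: S_def)
    have "labels_match n f (plab f)" by (simp add: labels_match_def plab_def)
    then show "\<exists>f\<in>V. \<exists>p. labels_match n f p \<and> g = toy_op n (sgn_bit (evalv n f v)) p"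
      using f unfolding T_def by blast
  qed
  ultimately show ?thesis by blast
qed




definition vec_of :: "nat \<Rightarrow> (nat \<Rightarrow> pl) \<Rightarrow> nat \<Rightarrow> bit" where
  "vec_of n p = (\<lambda>i. if i < 2*n then (if even i then xb (p (i div 2)) else zb (p (i div 2))) else 0)"

lemma vec_of_ps: "vec_of n p \<in> phase_space n" by (simp add: vec_of_def phase_space_def)

lemma vec_of_x: "j < n \<Longrightarrow> vec_of n p (2*j) = xb (p j)" by (simp add: vec_of_def)
lemma vec_of_z: "j < n \<Longrightarrow> vec_of n p (Suc (2*j)) = zb (p j)" by (simp add: vec_of_def)

lemma vec_of_labels: "labels_match n (vec_of n p) p"
  by (simp add: labels_match_def vec_of_x vec_of_z del: lab.simps)

lemma vec_of_mul: "vec_of n (\<lambda>i. pmul (p i) (q i)) = vadd (vec_of n p) (vec_of n q)"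
  by (simp add: vec_of_def vadd_def xb_mul zb_mul fun_eq_iff)

lemma vec_of_PI: "vec_of n (\<lambda>_. PI) = (\<lambda>_. 0)"
  by (simp add: vec_of_def fun_eq_iff)

lemma vec_of_inj: "vec_of n p = vec_of n q \<Longrightarrow> \<forall>i<n. p i = q i"
proof (intro allI impI)
  fix i assume e: "vec_of n p = vec_of n q" and i: "i < n"
  have "xb (p i) = xb (q i)" using vec_of_x[OF i, of p] vec_of_x[OF i, of q] e by simp
  moreover have "zb (p i) = zb (q i)" using vec_of_z[OF i, of p] vec_of_z[OF i, of q] e by simp
  ultimately show "p i = q i" by (rule xz_inj)
qed

lemma symp_vec_of: "symp n (vec_of n p) (vec_of n q) = (\<Sum>j<n. omega (p j) (q j))"
  unfolding symp_def by (intro sum.cong refl) (simp add: vec_of_x vec_of_z omega_def)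

lemma labels_ps_eq: "f \<in> phase_space n \<Longrightarrow> labels_match n f p \<Longrightarrow> f = vec_of n p"
proof (rule ext)
  fix i assume f: "f \<in> phase_space n" and l: "labels_match n f p"
  show "f i = vec_of n p i"
  proof (cases "i < 2*n")
    case True
    then have j: "i div 2 < n" by simp
    have pl: "p (i div 2) = lab (f (2 * (i div 2))) (f (2 * (i div 2) + 1))" using l j by (simp add: labels_match_def)
    have "xb (lab a b) = a" "zb (lab a b) = b" for a b by (cases a; cases b; simp)+
    then have "xb (p (i div 2)) = f (2 * (i div 2))" "zb (p (i div 2)) = f (2 * (i div 2) + 1)" using pl by simp_all
    moreover have "even i \<Longrightarrow> 2 * (i div 2) = i" "odd i \<Longrightarrow> 2 * (i div 2) + 1 = i" by presburger+
    ultimately show ?thesis using True by (auto simp: vec_of_def)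
  next
    case False then show ?thesis using f by (simp add: vec_of_def phase_space_def)
  qed
qed

lemma part2:
  assumes st: "toy_stab n S"
  shows "\<exists>V v. gen_state n V v \<and> corr_state n S V v"
proof -
  have sg: "toy_subgroup n S" and cm: "\<forall>g\<in>S. \<forall>h\<in>S. toy_commute n g h" and nm: "toy_minus_one n \<notin> S"
    using st by (auto simp: toy_stab_def)
  have sub: "S \<subseteq> toy_group n" and one: "toy_one n \<in> S" and cl: "\<forall>g\<in>S. \<forall>h\<in>S. tmul g h \<in> S"
    using sg by (auto simp: toy_subgroup_def)
  have K1: "\<exists>\<alpha> p. \<alpha> \<in> {1,-1} \<and> g = toy_op n \<alpha> p" if "g \<in> S" for g
    using sub that unfolding toy_group_def by blast
  have K3: "\<alpha> = \<beta>" if "toy_op n \<alpha> p \<in> S" "toy_op n \<beta> q \<in> S" "\<alpha> \<in> {1,-1}" "\<beta> \<in> {1,-1}"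
    "\<forall>i<n. p i = q i" for \<alpha> \<beta> p q
  proof (rule ccontr)
    assume "\<alpha> \<noteq> \<beta>"
    then have ab: "\<alpha> * \<beta> = -1" using that(3,4) by auto
    have "tmul (toy_op n \<alpha> p) (toy_op n \<beta> q) \<in> S" using cl that(1,2) by blast
    moreover have "tmul (toy_op n \<alpha> p) (toy_op n \<beta> q) = toy_minus_one n"
      unfolding toy_op_mul ab toy_minus_one_def using that(5) by (intro toy_op_cong) simp
    ultimately show False using nm by simp
  qed
  define V where "V = {vec_of n p | p. \<exists>\<alpha>\<in>{1,-1}. toy_op n \<alpha> p \<in> S}"
  define \<chi> where "\<chi> = (\<lambda>f. if \<exists>p. vec_of n p = f \<and> toy_op n 1 p \<in> S then (0::bit) else 1)"
  have K4: "\<alpha> = sgn_bit (\<chi> (vec_of n p))" if "toy_op n \<alpha> p \<in> S" "\<alpha> \<in> {1,-1}" for \<alpha> p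
  proof (cases "\<alpha> = 1")
    case True
    then show ?thesis using that by (auto simp: \<chi>_def sgn_bit_def)
  next
    case False
    then have a: "\<alpha> = -1" using that by auto
    have "\<not> (\<exists>q. vec_of n q = vec_of n p \<and> toy_op n 1 q \<in> S)"
    proof
      assume "\<exists>q. vec_of n q = vec_of n p \<and> toy_op n 1 q \<in> S"
      then obtain q where q: "vec_of n q = vec_of n p" "toy_op n 1 q \<in> S" by blast
      have "(1::int) = -1" using K3[OF q(2) that(1)[unfolded a]] vec_of_inj[OF q(1)] by simp
      then show False by simp
    qed
    then show ?thesis using a by (simp add: \<chi>_def sgn_bit_def)
  qed
  have Vps: "V \<subseteq> phase_space n" by (auto simp: V_def vec_of_ps)
  have V0: "(\<lambda>_. 0) \<in> V"
  proof -
    have "toy_op n 1 (\<lambda>_. PI) \<in> S" using one by (simp add: toy_one_def)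
    then show ?thesis unfolding V_def using vec_of_PI[of n] by force
  qed
  have Vadd: "vadd f g \<in> V \<and> \<chi> (vadd f g) = \<chi> f + \<chi> g" if fV: "f \<in> V" and gV: "g \<in> V" for f g
  proof -
    obtain p \<alpha> where p: "f = vec_of n p" "\<alpha> \<in> {1,-1}" "toy_op n \<alpha> p \<in> S" using fV unfolding V_def by blast
    obtain q \<beta> where q: "g = vec_of n q" "\<beta> \<in> {1,-1}" "toy_op n \<beta> q \<in> S" using gV unfolding V_def by blast
    have ab: "\<alpha> * \<beta> \<in> {1,-1}" using p q by auto
    have m: "toy_op n (\<alpha> * \<beta>) (\<lambda>i. pmul (p i) (q i)) \<in> S"
      using cl p q by (metis toy_op_mul)
    have "vadd f g = vec_of n (\<lambda>i. pmul (p i) (q i))" using p q by (simp add: vec_of_mul)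
    moreover have "vec_of n (\<lambda>i. pmul (p i) (q i)) \<in> V" using m ab unfolding V_def by blast
    moreover have "sgn_bit (\<chi> (vadd f g)) = sgn_bit (\<chi> f + \<chi> g)"
      using K4[OF m ab] K4[OF p(3,2)] K4[OF q(3,2)] p(1) q(1) calculation(1)
      by (simp add: sgn_bit_add)
    ultimately show ?thesis using sgn_bit_inj by metis
  qed
  obtain v where v: "\<forall>i\<ge>2*n. v i = 0" "\<forall>f\<in>V. (\<Sum>i<2*n. f i * v i) = \<chi> f"
    using extend_char[of V "2*n" \<chi>] Vps V0 Vadd by (auto simp: phase_space_def)
  have ev: "evalv n f v = \<chi> f" if "f \<in> V" for f using v(2) that by (simp add: evalv_def)
  have iso: "isotropic n V" unfolding isotropic_def subspace2_def
  proof (intro conjI ballI allI)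
    show "V \<subseteq> phase_space n" by (rule Vps)
    show "(\<lambda>_. 0) \<in> V" by (rule V0)
    show "vadd f g \<in> V" if "f \<in> V" "g \<in> V" for f g using Vadd that by blast
    show "(\<lambda>i. c * f i) \<in> V" if "f \<in> V" for c :: bit and f
      using that V0 by (cases c) simp_all
    show "symp n f g = 0" if fV: "f \<in> V" and gV: "g \<in> V" for f g
    proof -
      obtain p \<alpha> where p: "f = vec_of n p" "\<alpha> \<in> {1,-1}" "toy_op n \<alpha> p \<in> S" using fV unfolding V_def by blast
      obtain q \<beta> where q: "g = vec_of n q" "\<beta> \<in> {1,-1}" "toy_op n \<beta> q \<in> S" using gV unfolding V_def by blast
      have "toy_commute n (toy_op n \<alpha> p) (toy_op n \<beta> q)" using cm p q by blast
      then have "(\<Sum>i<n. omega (p i) (q i)) = 0"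
        unfolding toy_commute_def by (simp only: toy_m_op[OF p(2)] toy_m_op[OF q(2)] qcommute_iff[OF p(2) q(2)])
      then show ?thesis using p q by (simp add: symp_vec_of)
    qed
  qed
  have gs: "gen_state n V v" using iso v(1) by (simp add: gen_state_def phase_space_def)
  have cs: "corr_state n S V v" unfolding corr_state_def
  proof (intro conjI ballI)
    fix f assume f: "f \<in> V"
    then obtain p \<alpha> where p: "f = vec_of n p" "\<alpha> \<in> {1,-1}" "toy_op n \<alpha> p \<in> S" using f unfolding V_def by blast
    have "toy_op n (sgn_bit (evalv n f v)) p \<in> S" using K4[OF p(3,2)] ev[OF f] p(1,3) by simp
    then show "\<exists>p. labels_match n f p \<and> toy_op n (sgn_bit (evalv n f v)) p \<in> S"
      using p(1) vec_of_labels by blast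
  next
    fix g assume g: "g \<in> S"
    then obtain \<alpha> p where a: "\<alpha> \<in> {1,-1}" "g = toy_op n \<alpha> p" using K1 by blast
    have f: "vec_of n p \<in> V" using a g unfolding V_def by blast
    have "g = toy_op n (sgn_bit (evalv n (vec_of n p) v)) p" using K4[of \<alpha> p] a g ev[OF f] by simp
    then show "\<exists>f\<in>V. \<exists>p. labels_match n f p \<and> g = toy_op n (sgn_bit (evalv n f v)) p"
      using f vec_of_labels by blast
  qed
  show ?thesis using gs cs by blast
qed


theorem mainTheorem3:
  fixes n :: nat
  assumes "n \<ge> 1"
  shows "(\<forall>V v. gen_state n V v \<longrightarrow> (\<exists>S. toy_stab n S \<and> corr_state n S V v))
       \<and> (\<forall>S. toy_stab n S \<longrightarrow> (\<exists>V v. gen_state n V v \<and> corr_state n S V v))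
       \<and> (\<forall>f g g' g''. f \<in> phase_space n \<longrightarrow> g \<in> phase_space n \<longrightarrow>
            corr_obs n f g' \<longrightarrow> corr_obs n g g'' \<longrightarrow> corr_obs n (vadd f g) (tmul g' g''))"
  using part1 part2 part3 by blast

end
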